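(* Every monomial ideal of $\mathcal{A}$ is finitely generated.
   Context: Let $\mathbf{k}$ be a commutative noetherian ring, $r$ a positive integer, $x_1,\dots,x_r$ the standard basis of $\mathbf{k}^r$, and $\mathcal{A}=\bigoplus_{n,d\ge0}(\mathrm{Sym}^d\mathbf{k}^r)^{\otimes n}$, bigraded by $(d,n)$. For a split $\sigma$ of $[n+m]$ (subset $\{i_1<\cdots<i_n\}$ and complement $\{j_1<\cdots<j_m\}$), $\cdot_\sigma:(\mathrm{Sym}^d\mathbf{k}^r)^{\otimes n}\otimes(\mathrm{Sym}^d\mathbf{k}^r)^{\otimes m}\to(\mathrm{Sym}^d\mathbf{k}^r)^{\otimes(n+m)}$ places the first argument's factors in positions $i_k$ and the second's in positions $j_k$; it is $0$ on other bidegrees. $*:(\mathrm{Sym}^d\mathbf{k}^r)^{\otimes n}\otimes(\mathrm{Sym}^e\mathbf{k}^r)^{\otimes n}\to(\mathrm{Sym}^{d+e}\mathbf{k}^r)^{\otimes n}$ is factorwise multiplication, $0$ on other bidegrees. An ideal is a bihomogeneous subspace $I$ with $g*f,\ g\cdot_\sigma f\in I$ for all $f\in I$, $g\in\mathcal{A}$, splits $\sigma$; the ideal generated by a set is the smallest ideal containing it. A monomial is $w_1\otimes\cdots\otimes w_n$ with each $w_i$ a scalar multiple of a monomial in $x_1,\dots,x_r$; a monomial ideal is an ideal generated by monomials. *)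

theory Defs
  imports "HOL-Algebra.Ring_Divisibility"
begin

definition type_ring :: "('k::comm_ring_1) ring" where
  "type_ring = \<lparr>carrier = UNIV, monoid.mult = (*), one = 1, zero = 0, add = (+)\<rparr>"

text \<open>A basis element of (Sym^d k^r)^{tensor n} is a pair (d, ws) where ws is a list of
  length n of exponent vectors (lists of length r) each of total degree d.  The degree d is
  recorded explicitly because for n = 0 the component (Sym^d k^r)^{tensor 0} = k exists
  for every d.\<close>

type_synonym bmon = "nat \<times> nat list list"

definition valid_bmon :: "nat \<Rightarrow> bmon \<Rightarrow> bool" where
  "valid_bmon r b \<longleftrightarrow> (\<forall>w \<in> set (snd b). length w = r \<and> sum_list w = fst b)"

definition inA :: "nat \<Rightarrow> (bmon \<Rightarrow> 'k::comm_ring_1) \<Rightarrow> bool" where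
  "inA r f \<longleftrightarrow> finite {b. f b \<noteq> 0} \<and> (\<forall>b. f b \<noteq> 0 \<longrightarrow> valid_bmon r b)"

definition lift_op :: "(bmon \<Rightarrow> bmon \<Rightarrow> bmon option) \<Rightarrow>
    (bmon \<Rightarrow> 'k::comm_ring_1) \<Rightarrow> (bmon \<Rightarrow> 'k) \<Rightarrow> (bmon \<Rightarrow> 'k)" where
  "lift_op op g f = (\<lambda>b. \<Sum>p \<in> {(b1, b2). g b1 \<noteq> 0 \<and> f b2 \<noteq> 0 \<and> op b1 b2 = Some b}.
       g (fst p) * f (snd p))"

definition star_b :: "bmon \<Rightarrow> bmon \<Rightarrow> bmon option" where
  "star_b b c = (if length (snd b) = length (snd c)
      then Some (fst b + fst c, map2 (map2 (+)) (snd b) (snd c)) else None)"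

definition star_A :: "(bmon \<Rightarrow> 'k::comm_ring_1) \<Rightarrow> (bmon \<Rightarrow> 'k) \<Rightarrow> (bmon \<Rightarrow> 'k)" where
  "star_A g f = lift_op star_b g f"

text \<open>A split sigma of [n+m] is encoded by the set S of the n positions i_1 < ... < i_n
  (0-based: S \<subseteq> {0..<n+m}, card S = n).  The shuffle places the k-th entry of the first
  list at the k-th smallest element of S and the k-th entry of the second list at the k-th
  smallest element of the complement.\<close>

definition shuffle :: "nat set \<Rightarrow> 'a list \<Rightarrow> 'a list \<Rightarrow> 'a list" where
  "shuffle S xs ys = map (\<lambda>i. if i \<in> S then xs ! card {j \<in> S. j < i}
                             else ys ! card {j. j < i \<and> j \<notin> S})
                        [0..<length xs + length ys]"

definition is_split :: "nat \<Rightarrow> nat \<Rightarrow> nat set \<Rightarrow> bool" where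
  "is_split n m S \<longleftrightarrow> S \<subseteq> {0..<n+m} \<and> card S = n"

definition dot_b :: "nat \<Rightarrow> nat \<Rightarrow> nat set \<Rightarrow> bmon \<Rightarrow> bmon \<Rightarrow> bmon option" where
  "dot_b n m S b c = (if length (snd b) = n \<and> length (snd c) = m \<and> fst b = fst c
      then Some (fst b, shuffle S (snd b) (snd c)) else None)"

definition dot_A :: "nat \<Rightarrow> nat \<Rightarrow> nat set \<Rightarrow> (bmon \<Rightarrow> 'k::comm_ring_1) \<Rightarrow> (bmon \<Rightarrow> 'k) \<Rightarrow> (bmon \<Rightarrow> 'k)" where
  "dot_A n m S g f = lift_op (dot_b n m S) g f"

definition hcomp :: "nat \<Rightarrow> nat \<Rightarrow> (bmon \<Rightarrow> 'k::zero) \<Rightarrow> (bmon \<Rightarrow> 'k)" where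
  "hcomp d n f = (\<lambda>b. if fst b = d \<and> length (snd b) = n then f b else 0)"

definition is_A_ideal :: "nat \<Rightarrow> (bmon \<Rightarrow> 'k::comm_ring_1) set \<Rightarrow> bool" where
  "is_A_ideal r I \<longleftrightarrow>
     I \<subseteq> {f. inA r f} \<and>
     (\<lambda>_. 0) \<in> I \<and>
     (\<forall>f \<in> I. \<forall>g \<in> I. (\<lambda>b. f b + g b) \<in> I) \<and>
     (\<forall>c f. f \<in> I \<longrightarrow> (\<lambda>b. c * f b) \<in> I) \<and>
     (\<forall>f \<in> I. \<forall>d n. hcomp d n f \<in> I) \<and>
     (\<forall>f \<in> I. \<forall>g. inA r g \<longrightarrow> star_A g f \<in> I) \<and>
     (\<forall>f \<in> I. \<forall>g. inA r g \<longrightarrow> (\<forall>n m S. is_split n m S \<longrightarrow> dot_A n m S g f \<in> I))"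

definition ideal_gen :: "nat \<Rightarrow> (bmon \<Rightarrow> 'k::comm_ring_1) set \<Rightarrow> (bmon \<Rightarrow> 'k) set" where
  "ideal_gen r G = \<Inter> {I. is_A_ideal r I \<and> G \<subseteq> I}"

definition is_monomial :: "nat \<Rightarrow> (bmon \<Rightarrow> 'k::comm_ring_1) \<Rightarrow> bool" where
  "is_monomial r f \<longleftrightarrow> (\<exists>b c. valid_bmon r b \<and> f = (\<lambda>b'. if b' = b then c else 0))"

definition is_monomial_ideal :: "nat \<Rightarrow> (bmon \<Rightarrow> 'k::comm_ring_1) set \<Rightarrow> bool" where
  "is_monomial_ideal r I \<longleftrightarrow> is_A_ideal r I \<and>
     (\<exists>M. (\<forall>f \<in> M. is_monomial r f) \<and> I = ideal_gen r M)"

definition finitely_generated_A :: "nat \<Rightarrow> (bmon \<Rightarrow> 'k::comm_ring_1) set \<Rightarrow> bool" where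
  "finitely_generated_A r I \<longleftrightarrow> (\<exists>G. finite G \<and> I = ideal_gen r G)"

end

theory Submission
  imports Defs "HOL-Library.Sublist" "HOL-Library.Ramsey"
begin


definition monom :: "bmon \<Rightarrow> 'k::comm_ring_1 \<Rightarrow> bmon \<Rightarrow> 'k" where
  "monom b c = (\<lambda>x. if x = b then c else 0)"

lemma lift_op_mono:
  fixes c :: "'k::comm_ring_1"
  assumes "c \<noteq> 0"
  shows "lift_op op (monom b1 1) (monom b2 c) = (\<lambda>x. if op b1 b2 = Some x then c else 0)"
proof
  fix x
  have one: "(1::'k) \<noteq> 0" using assms by (metis mult_1 mult_zero_left)
  have "{(u, v). monom b1 1 u \<noteq> (0::'k) \<and> monom b2 c v \<noteq> 0 \<and> op u v = Some x} =
        (if op b1 b2 = Some x then {(b1,b2)} else {})"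
    using one assms by (auto simp: monom_def)
  then show "lift_op op (monom b1 1) (monom b2 c) x = (if op b1 b2 = Some x then c else 0)"
    by (simp add: lift_op_def monom_def)
qed

lemma inA_mono: "valid_bmon r b \<Longrightarrow> inA r (monom b c)"
  by (auto simp: inA_def monom_def)

lemma ideal_mono0: "is_A_ideal r J \<Longrightarrow> monom b 0 \<in> J"
  unfolding is_A_ideal_def monom_def by (auto simp: if_distrib cong: if_cong)



lemma card_less_minus: "p < i \<Longrightarrow> card {j. j < i \<and> j \<noteq> (p::nat)} = i - 1"
proof -
  assume "p < i"
  have "{j. j < i \<and> j \<noteq> p} = {..<i} - {p}" by auto
  then show ?thesis using \<open>p<i\<close> by simp
qed

lemma shuffle_single:
  assumes "p \<le> length ws"
  shows "shuffle {p} [v] ws = take p ws @ v # drop p ws"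
proof (rule nth_equalityI)
  show "length (shuffle {p} [v] ws) = length (take p ws @ v # drop p ws)"
    using assms by (simp add: shuffle_def)
  fix i assume "i < length (shuffle {p} [v] ws)"
  then have i: "i < Suc (length ws)" by (simp add: shuffle_def)
  show "shuffle {p} [v] ws ! i = (take p ws @ v # drop p ws) ! i"
  proof (cases "i = p")
    case True
    then show ?thesis using assms i by (simp add: shuffle_def nth_append del: upt_Suc cong: conj_cong)
  next
    case False
    show ?thesis
    proof (cases "i < p")
      case True
      have "{j. j < i \<and> j \<notin> {p}} = {..<i}" using True by auto
      then show ?thesis using True i assms by (simp add: shuffle_def nth_append del: upt_Suc)
    next
      case False2: False
      then have "p < i" using False by simp
      then have c: "card {j. j < i \<and> j \<notin> {p}} = i - 1" using card_less_minus by simp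
      have "(take p ws @ v # drop p ws) ! i = ws ! (i - 1)"
        using \<open>p<i\<close> i assms by (simp add: nth_append min_def)
      then show ?thesis using \<open>p<i\<close> i c by (simp add: shuffle_def nth_append del: upt_Suc)
    qed
  qed
qed



lemma ideal_dot: "is_A_ideal r J \<Longrightarrow> f \<in> J \<Longrightarrow> inA r g \<Longrightarrow> is_split n m S \<Longrightarrow> dot_A n m S g f \<in> J"
  unfolding is_A_ideal_def by blast
lemma ideal_star: "is_A_ideal r J \<Longrightarrow> f \<in> J \<Longrightarrow> inA r g \<Longrightarrow> star_A g f \<in> J"
  unfolding is_A_ideal_def by blast
lemma ideal_add: "is_A_ideal r J \<Longrightarrow> f \<in> J \<Longrightarrow> g \<in> J \<Longrightarrow> (\<lambda>b. f b + g b) \<in> J"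
  unfolding is_A_ideal_def by blast
lemma ideal_smult: "is_A_ideal r J \<Longrightarrow> f \<in> J \<Longrightarrow> (\<lambda>b. c * f b) \<in> J"
  unfolding is_A_ideal_def by blast
lemma ideal_zero: "is_A_ideal r J \<Longrightarrow> (\<lambda>_. 0) \<in> J"
  unfolding is_A_ideal_def by blast

lemma mono_eq: "monom b c = monom b' c \<Longrightarrow> c \<noteq> 0 \<Longrightarrow> b = b'"
  by (metis monom_def)

lemma insert_mono:
  fixes c :: "'k::comm_ring_1"
  assumes J: "is_A_ideal r J" and v: "length v = r" "sum_list v = D"
    and m: "monom (D, pre@ws) c \<in> J"
  shows "monom (D, pre @ v # ws) c \<in> J"
proof (cases "c = 0")
  case True then show ?thesis using ideal_mono0[OF J] by simp
next
  case False
  have vb: "valid_bmon r (D,[v])" using v by (simp add: valid_bmon_def)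
  have sp: "is_split 1 (length (pre@ws)) {length pre}" by (simp add: is_split_def)
  have "dot_A 1 (length (pre@ws)) {length pre} (monom (D,[v]) 1) (monom (D, pre@ws) c) \<in> J"
    by (rule ideal_dot[OF J m inA_mono[OF vb] sp])
  moreover have "dot_A 1 (length (pre@ws)) {length pre} (monom (D,[v]) 1) (monom (D, pre@ws) c)
     = monom (D, pre @ v # ws) c"
  proof -
    have "dot_b 1 (length (pre@ws)) {length pre} (D,[v]) (D, pre@ws) = Some (D, pre @ v # ws)"
      unfolding dot_b_def using shuffle_single[of "length pre" "pre@ws" v] by simp
    then show ?thesis unfolding dot_A_def lift_op_mono[OF False] by (auto simp: monom_def)
  qed
  ultimately show ?thesis by simp
qed




lemma insert_list_mono:
  fixes c :: "'k::comm_ring_1"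
  assumes J: "is_A_ideal r J" and v: "\<forall>v\<in>set vs. length v = r \<and> sum_list v = D"
    and m: "monom (D, pre@ws) c \<in> J"
  shows "monom (D, pre @ vs @ ws) c \<in> J"
  using v m
proof (induction vs arbitrary: pre)
  case Nil then show ?case by simp
next
  case (Cons v vs)
  have "monom (D, pre @ v # ws) c \<in> J" using insert_mono[OF J _ _ Cons.prems(2)] Cons.prems(1) by simp
  then have "monom (D, (pre @ [v]) @ ws) c \<in> J" by simp
  then have "monom (D, (pre @ [v]) @ vs @ ws) c \<in> J" using Cons.IH[of "pre@[v]"] Cons.prems by simp
  then show ?case by simp
qed

lemma subseq_mono:
  fixes c :: "'k::comm_ring_1"
  assumes "subseq xs ys" and J: "is_A_ideal r J" and v: "\<forall>v\<in>set ys. length v = r \<and> sum_list v = D"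
    and "monom (D, pre@xs) c \<in> J"
  shows "monom (D, pre @ ys) c \<in> J"
  using assms(1) v assms(4)
proof (induction arbitrary: pre rule: list_emb.induct)
  case (list_emb_Nil ys)
  then show ?case using insert_list_mono[OF J, of ys D pre "[]"] by simp
next
  case (list_emb_Cons xs ys y)
  then have "monom (D, pre @ ys) c \<in> J" by simp
  then show ?case using insert_mono[OF J, of y D pre ys] list_emb_Cons.prems by simp
next
  case (list_emb_Cons2 x y xs ys)
  then show ?case using list_emb_Cons2.IH[of "pre@[x]"] list_emb_Cons2.prems list_emb_Cons2.hyps by simp
qed

lemma emb_decomp: "list_emb P xs ys \<Longrightarrow> \<exists>us. list_all2 P xs us \<and> subseq us ys"
proof (induction rule: list_emb.induct)
  case (list_emb_Nil ys) then show ?case by auto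
next
  case (list_emb_Cons xs ys y) then show ?case by auto
next
  case (list_emb_Cons2 x y xs ys) then show ?case by (auto intro: list_all2_Cons[THEN iffD2])
qed

lemma vec_diff:
  assumes "list_all2 (\<le>) (w::nat list) u"
  shows "map2 (+) (map2 (-) u w) w = u \<and> sum_list (map2 (-) u w) = sum_list u - sum_list w \<and>
    length (map2 (-) u w) = length u \<and> sum_list w \<le> sum_list u"
  using assms
proof (induction rule: list_all2_induct)
  case Nil
  show ?case by simp
next
  case (Cons x xs y ys)
  then show ?case by (auto simp: list_all2_lengthD)
qed



fun le_b :: "bmon \<Rightarrow> bmon \<Rightarrow> bool" where
  "le_b (d, ws) (D, ws') \<longleftrightarrow> d \<le> D \<and> list_emb (list_all2 (\<le>)) ws ws'"

lemma diffs:
  assumes "list_all2 (list_all2 (\<le>)) ws us"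
    and "\<forall>w\<in>set ws. length w = r \<and> sum_list w = (d::nat)"
    and "\<forall>u\<in>set us. length u = r \<and> sum_list u = D"
  shows "map2 (map2 (+)) (map2 (map2 (-)) us ws) ws = us \<and>
    (\<forall>x \<in> set (map2 (map2 (-)) us ws). length x = r \<and> sum_list x = D - d) \<and>
    length (map2 (map2 (-)) us ws) = length ws"
  using assms
proof (induction rule: list_all2_induct)
  case Nil then show ?case by simp
next
  case (Cons x xs y ys)
  have v: "map2 (+) (map2 (-) y x) x = y \<and> sum_list (map2 (-) y x) = sum_list y - sum_list x \<and>
    length (map2 (-) y x) = length y \<and> sum_list x \<le> sum_list y" using vec_diff[OF Cons.hyps(1)] .
  have "length xs = length ys" using Cons.hyps(2) by (rule list_all2_lengthD)
  then show ?case using Cons v by auto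
qed

lemma div_mono:
  fixes c :: "'k::comm_ring_1"
  assumes J: "is_A_ideal r J" and vb: "valid_bmon r (d, ws)" and vb': "valid_bmon r (D, ws')"
    and le: "le_b (d, ws) (D, ws')" and m: "monom (d, ws) c \<in> J"
  shows "monom (D, ws') c \<in> J"
proof (cases "c = 0")
  case True then show ?thesis using ideal_mono0[OF J] by simp
next
  case False
  from le have dD: "d \<le> D" and em: "list_emb (list_all2 (\<le>)) ws ws'" by auto
  obtain us where us: "list_all2 (list_all2 (\<le>)) ws us" "subseq us ws'"
    using emb_decomp[OF em] by blast
  have usv: "\<forall>u\<in>set us. length u = r \<and> sum_list u = D"
    using us(2) vb' by (auto simp: valid_bmon_def dest: list_emb_set)
  define ds where "ds = map2 (map2 (-)) us ws"
  have D: "map2 (map2 (+)) ds ws = us" "\<forall>x \<in> set ds. length x = r \<and> sum_list x = D - d"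
     "length ds = length ws"
    using diffs[OF us(1) _ usv, of d] vb unfolding ds_def by (auto simp: valid_bmon_def)
  have vg: "valid_bmon r (D - d, ds)" using D(2) by (simp add: valid_bmon_def)
  have "star_A (monom (D - d, ds) 1) (monom (d, ws) c) \<in> J"
    by (rule ideal_star[OF J m inA_mono[OF vg]])
  moreover have "star_b (D - d, ds) (d, ws) = Some (D, us)"
    using D dD by (simp add: star_b_def)
  ultimately have "monom (D, us) c \<in> J"
    unfolding star_A_def lift_op_mono[OF False] by (simp add: monom_def eq_commute)
  then show ?thesis
    using subseq_mono[OF us(2) J, of D "[]"] vb' by (simp add: valid_bmon_def)
qed



definition good :: "('a \<Rightarrow> 'a \<Rightarrow> bool) \<Rightarrow> (nat \<Rightarrow> 'a) \<Rightarrow> bool" where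
  "good P f \<longleftrightarrow> (\<exists>i j. i < j \<and> P (f i) (f j))"

definition af :: "('a \<Rightarrow> 'a \<Rightarrow> bool) \<Rightarrow> 'a set \<Rightarrow> bool" where
  "af P A \<longleftrightarrow> (\<forall>f. (\<forall>i. f i \<in> A) \<longrightarrow> good P f)"

definition chains :: "('a \<Rightarrow> 'a \<Rightarrow> bool) \<Rightarrow> 'a set \<Rightarrow> bool" where
  "chains P A \<longleftrightarrow> (\<forall>f. (\<forall>i. f i \<in> A) \<longrightarrow>
     (\<exists>\<phi>::nat\<Rightarrow>nat. strict_mono \<phi> \<and> (\<forall>i j. i < j \<longrightarrow> P (f (\<phi> i)) (f (\<phi> j)))))"

lemma af_chains:
  assumes "af P A"
  shows "chains P A"
  unfolding chains_def
proof (intro allI impI)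
  fix f :: "nat \<Rightarrow> _" assume fA: "\<forall>i. f i \<in> A"
  define col where "col X = (if P (f (Min X)) (f (Max X)) then 0 else (1::nat))" for X :: "nat set"
  have "\<forall>x\<in>(UNIV::nat set). \<forall>y\<in>UNIV. x \<noteq> y \<longrightarrow> col {x, y} < 2" by (simp add: col_def)
  from Ramsey2[OF infinite_UNIV_nat this] obtain Y t where
    Y: "infinite Y" "t < 2" "\<forall>x\<in>Y. \<forall>y\<in>Y. x \<noteq> y \<longrightarrow> col {x, y} = t" by blast
  define \<phi> where "\<phi> = enumerate Y"
  have sm: "strict_mono \<phi>" unfolding \<phi>_def using Y(1) by (simp add: strict_mono_enumerate)
  have inY: "\<phi> i \<in> Y" for i unfolding \<phi>_def using Y(1) by (rule enumerate_in_set)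
  have colij: "col {\<phi> i, \<phi> j} = t" if "i < j" for i j
    using Y(3) inY sm that by (metis strict_mono_less less_irrefl)
  have minmax: "Min {\<phi> i, \<phi> j} = \<phi> i" "Max {\<phi> i, \<phi> j} = \<phi> j" if "i < j" for i j
  proof -
    have "\<phi> i < \<phi> j" using sm that by (rule strict_monoD)
    then show "Min {\<phi> i, \<phi> j} = \<phi> i" "Max {\<phi> i, \<phi> j} = \<phi> j" by auto
  qed
  show "\<exists>\<phi>::nat\<Rightarrow>nat. strict_mono \<phi> \<and> (\<forall>i j. i < j \<longrightarrow> P (f (\<phi> i)) (f (\<phi> j)))"
  proof (cases "t = 0")
    case True
    then have "\<forall>i j. i < j \<longrightarrow> P (f (\<phi> i)) (f (\<phi> j))"
      using colij minmax by (metis col_def zero_neq_one)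
    then show ?thesis using sm by blast
  next
    case False
    then have "\<forall>i j. i < j \<longrightarrow> \<not> P (f (\<phi> i)) (f (\<phi> j))"
      using colij minmax by (metis col_def)
    moreover have "good P (f \<circ> \<phi>)" using assms fA unfolding af_def by simp
    ultimately show ?thesis unfolding good_def by auto
  qed
qed

lemma chains_af: "chains P A \<Longrightarrow> af P A"
  unfolding chains_def af_def good_def
  by (metis lessI strict_mono_less)

lemma chains_prod:
  assumes "chains P A" "chains Q B"
  shows "chains (\<lambda>x y. P (fst x) (fst y) \<and> Q (snd x) (snd y)) (A \<times> B)"
  unfolding chains_def
proof (intro allI impI)
  fix f :: "nat \<Rightarrow> _" assume fA: "\<forall>i. f i \<in> A \<times> B"
  have f1: "\<forall>i. fst (f i) \<in> A" using fA by (simp add: mem_Times_iff)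
  obtain \<phi> :: "nat \<Rightarrow> nat" where \<phi>: "strict_mono \<phi>" "\<forall>i j. i < j \<longrightarrow> P (fst (f (\<phi> i))) (fst (f (\<phi> j)))"
    using assms(1)[unfolded chains_def, rule_format, of "\<lambda>i. fst (f i)", OF f1[rule_format]] by blast
  have f2: "\<forall>i. snd (f (\<phi> i)) \<in> B" using fA by (simp add: mem_Times_iff)
  obtain \<psi> :: "nat \<Rightarrow> nat" where \<psi>: "strict_mono \<psi>" "\<forall>i j. i < j \<longrightarrow> Q (snd (f (\<phi> (\<psi> i)))) (snd (f (\<phi> (\<psi> j))))"
    using assms(2)[unfolded chains_def, rule_format, of "\<lambda>i. snd (f (\<phi> i))", OF f2[rule_format]] by blast
  have "strict_mono (\<phi> \<circ> \<psi>)" using \<phi>(1) \<psi>(1) by (simp add: strict_mono_def)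
  moreover have "\<forall>i j. i < j \<longrightarrow> P (fst (f (\<phi> (\<psi> i)))) (fst (f (\<phi> (\<psi> j))))"
    using \<phi>(2) \<psi>(1) by (simp add: strict_mono_less)
  ultimately show "\<exists>\<phi>::nat\<Rightarrow>nat. strict_mono \<phi> \<and> (\<forall>i j. i < j \<longrightarrow> P (fst (f (\<phi> i))) (fst (f (\<phi> j))) \<and> Q (snd (f (\<phi> i))) (snd (f (\<phi> j))))"
    using \<psi>(2) by (intro exI[of _ "\<phi> \<circ> \<psi>"]) auto
qed

lemma af_nat: "af (\<le>) (UNIV :: nat set)"
  unfolding af_def good_def
proof (intro allI impI)
  fix f :: "nat \<Rightarrow> nat"
  define i where "i = arg_min f (\<lambda>_. True)"
  have "f i \<le> f (Suc i)" unfolding i_def by (rule arg_min_nat_le) simp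
  then show "\<exists>i j. i < j \<and> f i \<le> f j" by blast
qed

lemma chains_vec: "chains (list_all2 (\<le>)) {w :: nat list. length w = r}"
proof (induction r)
  case 0
  show ?case unfolding chains_def by (auto intro!: exI[of _ id] simp: strict_mono_def)
next
  case (Suc r)
  have c: "chains (\<lambda>x y. fst x \<le> fst y \<and> list_all2 (\<le>) (snd x) (snd y)) ((UNIV::nat set) \<times> {w :: nat list. length w = r})"
    using chains_prod[OF af_chains[OF af_nat] Suc.IH] .
  show ?case unfolding chains_def
  proof (intro allI impI)
    fix f :: "nat \<Rightarrow> nat list" assume fA: "\<forall>i. f i \<in> {w. length w = Suc r}"
    then have "\<forall>i. (hd (f i), tl (f i)) \<in> UNIV \<times> {w :: nat list. length w = r}" by simp
    then obtain \<phi> :: "nat \<Rightarrow> nat" where \<phi>: "strict_mono \<phi>"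
      "\<forall>i j. i < j \<longrightarrow> hd (f (\<phi> i)) \<le> hd (f (\<phi> j)) \<and> list_all2 (\<le>) (tl (f (\<phi> i))) (tl (f (\<phi> j)))"
      using c unfolding chains_def by (drule_tac x="\<lambda>i. (hd (f i), tl (f i))" in spec) auto
    have "f i = hd (f i) # tl (f i)" for i using fA by (metis Zero_neq_Suc list.collapse list.size(3) mem_Collect_eq)
    then have "\<forall>i j. i < j \<longrightarrow> list_all2 (\<le>) (f (\<phi> i)) (f (\<phi> j))"
      using \<phi>(2) by (metis list_all2_Cons)
    then show "\<exists>\<phi>::nat\<Rightarrow>nat. strict_mono \<phi> \<and> (\<forall>i j. i < j \<longrightarrow> list_all2 (\<le>) (f (\<phi> i)) (f (\<phi> j)))"
      using \<phi>(1) by blast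
  qed
qed



locale higman_ctx =
  fixes P :: "'a \<Rightarrow> 'a \<Rightarrow> bool" and A :: "'a set"
begin

definition ext :: "'a list list \<Rightarrow> bool" where
  "ext p \<longleftrightarrow> (\<exists>g. (\<forall>i. g i \<in> lists A) \<and> \<not> good (list_emb P) g \<and> (\<forall>k<length p. g k = p ! k))"

definition nxt :: "'a list list \<Rightarrow> 'a list" where
  "nxt p = (SOME w. ext (p @ [w]) \<and> (\<forall>w'. ext (p @ [w']) \<longrightarrow> length w \<le> length w'))"

lemma nxt_spec:
  assumes "ext p"
  shows "ext (p @ [nxt p]) \<and> (\<forall>w'. ext (p @ [w']) \<longrightarrow> length (nxt p) \<le> length w')"
proof -
  from assms obtain g where g: "\<forall>i. g i \<in> lists A" "\<not> good (list_emb P) g" "\<forall>k<length p. g k = p ! k"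
    unfolding ext_def by blast
  have "ext (p @ [g (length p)])" unfolding ext_def
    using g by (intro exI[of _ g]) (auto simp: nth_append less_Suc_eq)
  then have "\<exists>w. ext (p @ [w]) \<and> (\<forall>w'. ext (p @ [w']) \<longrightarrow> length w \<le> length w')"
    by (rule ex_has_least_nat)
  then show ?thesis unfolding nxt_def by (rule someI_ex)
qed

fun pre :: "nat \<Rightarrow> 'a list list" where
  "pre 0 = []"
| "pre (Suc n) = pre n @ [nxt (pre n)]"

lemma length_pre[simp]: "length (pre n) = n"
  by (induction n) auto

lemma pre_nth: "k < n \<Longrightarrow> pre n ! k = nxt (pre k)"
  by (induction n) (auto simp: nth_append less_Suc_eq)

lemma ext_pre: "ext [] \<Longrightarrow> ext (pre n)"
  by (induction n) (auto dest: nxt_spec)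

definition m :: "nat \<Rightarrow> 'a list" where "m k = nxt (pre k)"

lemma m_props:
  assumes "ext []"
  shows "\<forall>i. m i \<in> lists A" "\<not> good (list_emb P) m"
    "\<And>n g. (\<forall>i. g i \<in> lists A) \<Longrightarrow> \<not> good (list_emb P) g \<Longrightarrow> (\<forall>k<n. g k = m k) \<Longrightarrow> length (m n) \<le> length (g n)"
proof -
  show "\<forall>i. m i \<in> lists A"
  proof
    fix i
    from ext_pre[OF assms, of "Suc i"] obtain g where "\<forall>i. g i \<in> lists A" "\<forall>k<Suc i. g k = pre (Suc i) ! k"
      unfolding ext_def by auto
    then show "m i \<in> lists A" using pre_nth[of i "Suc i"] by (metis lessI m_def)
  qed
  show "\<not> good (list_emb P) m"
  proof
    assume "good (list_emb P) m"
    then obtain i j where ij: "i < j" "list_emb P (m i) (m j)" unfolding good_def by blast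
    from ext_pre[OF assms, of "Suc j"] obtain g where g: "\<not> good (list_emb P) g" "\<forall>k<Suc j. g k = pre (Suc j) ! k"
      unfolding ext_def by auto
    have "g i = m i" "g j = m j" using g(2) ij(1) pre_nth[of _ "Suc j"] by (auto simp: m_def)
    then show False using g(1) ij unfolding good_def by metis
  qed
  fix n g assume g: "\<forall>i. g i \<in> lists A" "\<not> good (list_emb P) g" "\<forall>k<n. g k = m k"
  have "ext (pre n @ [g n])" unfolding ext_def
    using g by (intro exI[of _ g]) (auto simp: nth_append less_Suc_eq pre_nth m_def)
  then show "length (m n) \<le> length (g n)" using nxt_spec[OF ext_pre[OF assms, of n]] m_def by simp
qed

end

lemma higman:
  assumes "af P A"
  shows "af (list_emb P) (lists A)"
proof (rule ccontr)
  assume "\<not> af (list_emb P) (lists A)"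
  then obtain f0 where f0: "\<forall>i. f0 i \<in> lists A" "\<not> good (list_emb P) f0" unfolding af_def by blast
  interpret higman_ctx P A .
  have e: "ext []" unfolding ext_def using f0 by auto
  note M = m_props[OF e]
  have ne: "m i \<noteq> []" for i
  proof
    assume "m i = []"
    then have "list_emb P (m i) (m (Suc i))" by simp
    then show False using M(2) unfolding good_def by blast
  qed
  define h where "h i = hd (m i)" for i
  define t where "t i = tl (m i)" for i
  have mht: "m i = h i # t i" for i using ne[of i] unfolding h_def t_def by simp
  have "h i # t i \<in> lists A" for i using M(1) mht[of i, symmetric] by simp
  then have hA: "\<forall>i. h i \<in> A" and tA: "\<forall>i. t i \<in> lists A" by auto
  have ch: "chains P A" by (rule af_chains[OF assms])
  have "\<exists>\<phi>::nat\<Rightarrow>nat. strict_mono \<phi> \<and> (\<forall>i j. i < j \<longrightarrow> P (h (\<phi> i)) (h (\<phi> j)))"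
  proof -
    have "(\<forall>i. h i \<in> A) \<longrightarrow> (\<exists>\<phi>::nat\<Rightarrow>nat. strict_mono \<phi> \<and> (\<forall>i j. i < j \<longrightarrow> P (h (\<phi> i)) (h (\<phi> j))))"
      using ch unfolding chains_def by (rule spec)
    then show ?thesis using hA by (rule mp)
  qed
  then obtain \<phi> :: "nat \<Rightarrow> nat" where \<phi>: "strict_mono \<phi>" "\<forall>i j. i < j \<longrightarrow> P (h (\<phi> i)) (h (\<phi> j))"
    by (elim exE conjE)
  define g where "g k = (if k < \<phi> 0 then m k else t (\<phi> (k - \<phi> 0)))" for k
  have gA: "\<forall>i. g i \<in> lists A" using M(1) tA by (simp add: g_def)
  have phi0: "\<phi> 0 \<le> \<phi> l" for l using \<phi>(1) by (simp add: strict_mono_less_eq)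
  have gbad: "\<not> good (list_emb P) g"
  proof
    assume "good (list_emb P) g"
    then obtain i j where ij: "i < j" "list_emb P (g i) (g j)" unfolding good_def by blast
    show False
    proof (cases "j < \<phi> 0")
      case True
      then have "list_emb P (m i) (m j)" using ij by (simp add: g_def)
      then show False using M(2) ij(1) unfolding good_def by blast
    next
      case j: False
      show False
      proof (cases "i < \<phi> 0")
        case True
        then have "list_emb P (m i) (t (\<phi> (j - \<phi> 0)))" using ij j by (simp add: g_def)
        then have "list_emb P (m i) (m (\<phi> (j - \<phi> 0)))" by (subst mht) (rule list_emb_Cons)
        moreover have "i < \<phi> (j - \<phi> 0)" using True phi0[of "j - \<phi> 0"] by linarith
        ultimately show False using M(2) unfolding good_def by blast
      next
        case False
        then have e1: "list_emb P (t (\<phi> (i - \<phi> 0))) (t (\<phi> (j - \<phi> 0)))" using ij j by (simp add: g_def)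
        have lt: "i - \<phi> 0 < j - \<phi> 0" using False ij(1) by simp
        then have "P (h (\<phi> (i - \<phi> 0))) (h (\<phi> (j - \<phi> 0)))" using \<phi>(2) by blast
        then have "list_emb P (m (\<phi> (i - \<phi> 0))) (m (\<phi> (j - \<phi> 0)))" using e1 by (subst (1 2) mht) (rule list_emb_Cons2)
        moreover have "\<phi> (i - \<phi> 0) < \<phi> (j - \<phi> 0)" using \<phi>(1) lt by (rule strict_monoD)
        ultimately show False using M(2) unfolding good_def by blast
      qed
    qed
  qed
  have "length (m (\<phi> 0)) \<le> length (g (\<phi> 0))"
    by (rule M(3)[OF gA gbad]) (simp add: g_def)
  moreover have "g (\<phi> 0) = t (\<phi> 0)" by (simp add: g_def)
  ultimately show False using mht[of "\<phi> 0"] by simp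
qed



lemma le_b_alt: "le_b x y \<longleftrightarrow> fst x \<le> fst y \<and> list_emb (list_all2 (\<le>)) (snd x) (snd y)"
  by (cases x, cases y) simp

lemma chains_mono: "chains P A \<Longrightarrow> B \<subseteq> A \<Longrightarrow> (\<And>x y. P x y \<Longrightarrow> Q x y) \<Longrightarrow> chains Q B"
  unfolding chains_def by (meson subsetD)

lemma chains_bmon: "chains le_b {b. valid_bmon r b}"
proof -
  have "chains (\<lambda>x y. fst x \<le> fst y \<and> list_emb (list_all2 (\<le>)) (snd x) (snd y))
     ((UNIV::nat set) \<times> lists {w :: nat list. length w = r})"
    by (rule chains_prod[OF af_chains[OF af_nat] af_chains[OF higman[OF chains_af[OF chains_vec]]]])
  then show ?thesis
    by (rule chains_mono) (auto simp: valid_bmon_def le_b_alt)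
qed

lemma type_ring_simps[simp]: "carrier type_ring = UNIV" "mult type_ring = (*)" "add type_ring = (+)"
   "zero type_ring = 0" "one type_ring = 1"
  by (simp_all add: type_ring_def)

lemma coeff_ideal:
  fixes J :: "(bmon \<Rightarrow> 'k::comm_ring_1) set"
  assumes R: "ring (type_ring :: 'k ring)" and J: "is_A_ideal r J"
  shows "ideal {c. monom B c \<in> J} (type_ring :: 'k ring)"
proof -
  interpret ring "type_ring :: 'k ring" by (rule R)
  have add: "monom B (a + b) \<in> J" if "monom B a \<in> J" "monom B b \<in> J" for a b :: 'k
  proof -
    have "(\<lambda>x. monom B a x + monom B b x) \<in> J" by (rule ideal_add[OF J that])
    moreover have "(\<lambda>x. monom B a x + monom B b x) = monom B (a + b)" by (auto simp: monom_def)
    ultimately show ?thesis by simp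
  qed
  have sm: "monom B (x * a) \<in> J" if "monom B a \<in> J" for a x :: 'k
  proof -
    have "(\<lambda>y. x * monom B a y) \<in> J" by (rule ideal_smult[OF J that])
    moreover have "(\<lambda>y. x * monom B a y) = monom B (x * a)" by (auto simp: monom_def)
    ultimately show ?thesis by simp
  qed
  have inv: "inv\<^bsub>add_monoid type_ring\<^esub> a = - a" for a :: 'k
  proof -
    have "\<ominus>\<^bsub>type_ring\<^esub> a = - a" by (rule minus_equality) auto
    then show ?thesis by (simp add: a_inv_def)
  qed
  show ?thesis
  proof (rule idealI[OF R])
    show "subgroup {c. monom B c \<in> J} (add_monoid type_ring)"
    proof (rule add.subgroupI)
      show "{c. monom B c \<in> J} \<noteq> {}" using ideal_mono0[OF J, of B] by auto
      fix a assume "a \<in> {c. monom B c \<in> J}"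
      have "\<ominus>\<^bsub>type_ring\<^esub> a = - a" by (rule minus_equality) auto
      then show "\<ominus>\<^bsub>(type_ring :: 'k ring)\<^esub> a \<in> {c. monom B c \<in> J}"
        using sm[of a "-1"] \<open>a \<in> _\<close> by simp
    next
      fix a b assume "a \<in> {c. monom B c \<in> J}" "b \<in> {c. monom B c \<in> J}"
      then show "a \<oplus>\<^bsub>(type_ring :: 'k ring)\<^esub> b \<in> {c. monom B c \<in> J}" using add by simp
    qed simp
  next
    fix a x assume "a \<in> {c. monom B c \<in> J}"
    then show "x \<otimes>\<^bsub>type_ring\<^esub> a \<in> {c. monom B c \<in> J}" "a \<otimes>\<^bsub>type_ring\<^esub> x \<in> {c. monom B c \<in> J}"
      using sm[of a x] by (simp_all add: mult.commute)
  qed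
qed



fun pseq :: "('a set \<Rightarrow> 'a set) \<Rightarrow> 'a set \<Rightarrow> nat \<Rightarrow> 'a list" where
  "pseq G M 0 = []"
| "pseq G M (Suc n) = pseq G M n @ [SOME m. m \<in> M \<and> m \<notin> G (set (pseq G M n))]"

lemma pseq_len[simp]: "length (pseq G M n) = n"
  by (induction n) auto

lemma pseq_nth: "k < n \<Longrightarrow> pseq G M n ! k = pseq G M (Suc k) ! k"
  by (induction n) (auto simp: nth_append less_Suc_eq)

lemma pseq_props:
  assumes "\<And>F. finite F \<Longrightarrow> F \<subseteq> M \<Longrightarrow> \<exists>m\<in>M. m \<notin> G F"
  shows "set (pseq G M n) \<subseteq> M \<and> (\<forall>k<n. pseq G M n ! k \<in> M \<and> pseq G M n ! k \<notin> G (set (pseq G M k)))"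
proof (induction n)
  case 0 then show ?case by simp
next
  case (Suc n)
  let ?m = "SOME m. m \<in> M \<and> m \<notin> G (set (pseq G M n))"
  have "\<exists>m. m \<in> M \<and> m \<notin> G (set (pseq G M n))" using assms[of "set (pseq G M n)"] Suc by auto
  then have m: "?m \<in> M \<and> ?m \<notin> G (set (pseq G M n))" by (rule someI_ex)
  show ?case using Suc m by (auto simp: nth_append less_Suc_eq)
qed

lemma pseq_set: "set (pseq G M n) = (\<lambda>k. pseq G M (Suc k) ! k) ` {..<n}"
proof -
  have "set (pseq G M n) = (\<lambda>k. pseq G M n ! k) ` {..<n}"
    by (auto simp: set_conv_nth)
  also have "\<dots> = (\<lambda>k. pseq G M (Suc k) ! k) ` {..<n}"
    using pseq_nth by (intro image_cong) auto
  finally show ?thesis .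
qed

lemma gen_sub: "G \<subseteq> ideal_gen r G"
  unfolding ideal_gen_def by blast

lemma gen_least: "is_A_ideal r J \<Longrightarrow> G \<subseteq> J \<Longrightarrow> ideal_gen r G \<subseteq> J"
  unfolding ideal_gen_def by blast

lemma gen_crit: "M \<subseteq> ideal_gen r F \<Longrightarrow> ideal_gen r M \<subseteq> ideal_gen r F"
  unfolding ideal_gen_def by blast

theorem corollary2p5:
  fixes r :: nat and I :: "(bmon \<Rightarrow> 'k::comm_ring_1) set"
  assumes "noetherian_ring (type_ring :: 'k ring)"
    and "r > 0"
    and "is_monomial_ideal r I"
  shows "finitely_generated_A r I"
proof (rule ccontr)
  assume nfg: "\<not> finitely_generated_A r I"
  interpret noetherian_ring "type_ring :: 'k ring" by (rule assms(1))
  have Rr: "ring (type_ring :: 'k ring)" by (rule ring_axioms)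
  obtain M where IA: "is_A_ideal r I" and Mm: "\<forall>f \<in> M. is_monomial r f" and IM: "I = ideal_gen r M"
    using assms(3) unfolding is_monomial_ideal_def by blast
  have MI: "M \<subseteq> I" using IM gen_sub by blast
  have ex: "\<exists>m\<in>M. m \<notin> ideal_gen r F" if "finite F" "F \<subseteq> M" for F
  proof (rule ccontr)
    assume "\<not> (\<exists>m\<in>M. m \<notin> ideal_gen r F)"
    then have "M \<subseteq> ideal_gen r F" by blast
    then have "I \<subseteq> ideal_gen r F" using IM gen_crit by blast
    moreover have "ideal_gen r F \<subseteq> I" using gen_least[OF IA] that MI by blast
    ultimately have "I = ideal_gen r F" by blast
    then show False using nfg that unfolding finitely_generated_A_def by blast
  qed
  define s where "s k = pseq (ideal_gen r) M (Suc k) ! k" for k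
  have P: "set (pseq (ideal_gen r) M n) \<subseteq> M \<and> (\<forall>k<n. pseq (ideal_gen r) M n ! k \<in> M \<and>
       pseq (ideal_gen r) M n ! k \<notin> ideal_gen r (set (pseq (ideal_gen r) M k)))" for n
    by (rule pseq_props) (rule ex)
  have sM: "s k \<in> M" and snot: "s k \<notin> ideal_gen r (s ` {..<k})" for k
    using P[of "Suc k"] pseq_set[of "ideal_gen r" M k] unfolding s_def by auto
  have "\<forall>k. \<exists>b c. valid_bmon r b \<and> s k = monom b c"
    using Mm sM unfolding is_monomial_def monom_def by blast
  then obtain bk where "\<forall>k. \<exists>c. valid_bmon r (bk k) \<and> s k = monom (bk k) c" by (rule choice[THEN exE])
  then obtain ck where bc0: "\<forall>k. valid_bmon r (bk k) \<and> s k = monom (bk k) (ck k)" by (rule choice[THEN exE])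
  have bc: "valid_bmon r (bk k) \<and> s k = monom (bk k) (ck k)" for k using bc0 by blast
  have ch: "chains le_b {b. valid_bmon r b}" by (rule chains_bmon)
  have "\<exists>\<phi>::nat\<Rightarrow>nat. strict_mono \<phi> \<and> (\<forall>i j. i < j \<longrightarrow> le_b (bk (\<phi> i)) (bk (\<phi> j)))"
  proof -
    have "(\<forall>i. bk i \<in> {b. valid_bmon r b}) \<longrightarrow> (\<exists>\<phi>::nat\<Rightarrow>nat. strict_mono \<phi> \<and> (\<forall>i j. i < j \<longrightarrow> le_b (bk (\<phi> i)) (bk (\<phi> j))))"
      using ch unfolding chains_def by (rule spec)
    then show ?thesis using bc by simp
  qed
  then obtain \<phi> :: "nat \<Rightarrow> nat" where \<phi>: "strict_mono \<phi>" "\<forall>i j. i < j \<longrightarrow> le_b (bk (\<phi> i)) (bk (\<phi> j))"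
    by (elim exE conjE)
  define C where "C j = Idl\<^bsub>type_ring\<^esub> ((\<lambda>i. ck (\<phi> i)) ` {..j})" for j
  have Cid: "ideal (C j) type_ring" for j unfolding C_def by (rule genideal_ideal) simp
  have Cmono: "C j \<subseteq> C j'" if "j \<le> j'" for j j'
    unfolding C_def
  proof (rule genideal_minimal)
    show "ideal (Idl\<^bsub>type_ring\<^esub> ((\<lambda>i. ck (\<phi> i)) ` {..j'})) type_ring" by (rule genideal_ideal) simp
    have "(\<lambda>i. ck (\<phi> i)) ` {..j} \<subseteq> (\<lambda>i. ck (\<phi> i)) ` {..j'}" using that by auto
    also have "\<dots> \<subseteq> Idl\<^bsub>type_ring\<^esub> ((\<lambda>i. ck (\<phi> i)) ` {..j'})" by (rule genideal_self) simp
    finally show "(\<lambda>i. ck (\<phi> i)) ` {..j} \<subseteq> Idl\<^bsub>type_ring\<^esub> ((\<lambda>i. ck (\<phi> i)) ` {..j'})" .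
  qed
  have "\<Union>(range C) \<in> range C"
  proof (rule ideal_chain_is_trivial)
    show "range C \<noteq> {}" by simp
    show "subset.chain {I. ideal I type_ring} (range C)"
      unfolding subset.chain_def
    proof (intro conjI ballI)
      show "range C \<subseteq> {I. ideal I type_ring}" using Cid by auto
      fix x y assume "x \<in> range C" "y \<in> range C"
      then obtain a b where "x = C a" "y = C b" by blast
      then have "x \<subseteq> y \<or> y \<subseteq> x" using Cmono[of a b] Cmono[of b a] by (cases "a \<le> b") auto
      then show "(\<subset>)\<^sup>=\<^sup>= x y \<or> (\<subset>)\<^sup>=\<^sup>= y x" by auto
    qed
  qed
  then obtain j0 where j0: "\<Union>(range C) = C j0" by blast
  define N where "N = \<phi> (Suc j0)"
  have cN: "ck N \<in> C j0"
  proof -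
    have "ck N \<in> C (Suc j0)" unfolding C_def N_def by (rule genideal_self[THEN subsetD]) auto
    then show ?thesis using j0 by blast
  qed
  have "s N \<in> ideal_gen r (s ` {..<N})"
    unfolding ideal_gen_def
  proof (intro InterI, clarify)
    fix J assume J: "is_A_ideal r J" "s ` {..<N} \<subseteq> J"
    have K: "ideal {c. monom (bk N) c \<in> J} (type_ring :: 'k ring)" by (rule coeff_ideal[OF Rr J(1)])
    have gens: "(\<lambda>i. ck (\<phi> i)) ` {..j0} \<subseteq> {c. monom (bk N) c \<in> J}"
    proof (rule image_subsetI)
      fix i assume "i \<in> {..j0}"
      then have lt: "i < Suc j0" by simp
      then have "\<phi> i < N" unfolding N_def using \<phi>(1) lt by (simp add: strict_mono_less)
      then have "monom (bk (\<phi> i)) (ck (\<phi> i)) \<in> J" using J(2) bc[of "\<phi> i"] by auto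
      moreover have "le_b (bk (\<phi> i)) (bk N)" using \<phi>(2) lt unfolding N_def by blast
      ultimately have "monom (bk N) (ck (\<phi> i)) \<in> J"
        using div_mono[OF J(1), of "fst (bk (\<phi> i))" "snd (bk (\<phi> i))" "fst (bk N)" "snd (bk N)"] bc
        by simp
      then show "ck (\<phi> i) \<in> {c. monom (bk N) c \<in> J}" by simp
    qed
    have "C j0 \<subseteq> {c. monom (bk N) c \<in> J}" unfolding C_def by (rule genideal_minimal[OF K gens])
    then show "s N \<in> J" using cN bc[of N] by auto
  qed
  then show False using snot[of N] by blast
qed


end
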